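(* Let $0 < \alpha < 1$ and $\omega\in \Omega$. The random variable defined by \begin{equation*} R_{\mathrm{hk}}(\omega, \alpha) \stackrel{\mathrm{def}}{=} \inf \left\{ \begin{array}{l} R_0 \geq 1\,:\,\mbox{for all $R\geq R_0$, $q_t^\omega(x,y)$ satisfies the two-sided Gaussian bound}\\ c_{\text{hk}1} t^{-d/2} \exp\left(-c_{\text{hk}2} \frac{|x-y|_1^2}{t}\right) \leq q_t^\omega(x,y) \leq c_{\text{hk}3} t^{-d/2} \exp\left(-c_{\text{hk}4} \frac{|x-y|_1^2}{t}\right)\\ \mbox{for all $x\in \mathcal{S}_\infty \cap B(0,2r_{\alpha, R})$, $y\in \mathcal{S}_\infty$, and $t\geq R \vee |x-y|^{3/2}_1$} \end{array} \right\} \end{equation*} (with $\inf \varnothing =\infty$) satisfies, for all $n \in \mathbb{Z}_+$, \begin{equation*} \mathbb{P}^u \left[R_{\mathrm{hk}}(\,\cdot\,, \alpha)\geq n \right] \leq C(\alpha) e^{-c(\alpha) (\log n)^{1+\Delta_{\mathrm{S}}}}. \end{equation*} In particular, $R_{\mathrm{hk}}(\,\cdot\,, \alpha)$ is $\mathbb{P}^u$-a.s. finite.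
   Context: Setting: $d\geq 2$; a family of probability measures $\{\mathbb{P}^u : u\in(a,b)\}$ on $\Omega=\{0,1\}^{\mathbb{Z}^d}$ (site percolation, sites with $\omega(x)=1$ open) satisfying ergodicity under lattice shifts, monotonicity in $u$, a sprinkled decoupling inequality, local uniqueness of the infinite cluster in boxes with failure probability at most $e^{-f_{\mathrm{S}}(u,R)}$ where $f_{\mathrm{S}}(u,R)\geq(\log R)^{1+\Delta_{\mathrm{S}}}$ for $R$ large (this defines $\Delta_{\mathrm{S}}=\Delta_{\mathrm{S}}(u)>0$), and continuity and positivity of the density $\eta(u)=\mathbb{P}^u[0\in\mathcal{S}_\infty]$. $\mathcal{S}_\infty$ is the (a.s. unique) infinite open cluster; $X$ is the continuous-time constant-speed simple random walk on $\mathcal{S}_\infty$ with law $P^\omega_x$, edge weights $\mu_{\{x,y\}}=1$ on edges of $\mathcal{S}_\infty$, $\mu_x=\sum_y\mu_{\{x,y\}}$, and heat kernel $q^\omega_t(x,y)=P^\omega_x[X_t=y]/\mu_y$. $B(x,r)$ is the closed sup-norm ball in $\mathbb{Z}^d$. Known input (from Alves–Sapozhnikov / Sapozhnikov, with $\varepsilon=1/2$): there are random variables $\mathcal{T}(x,\omega)$ and constants $c_{\text{hk}1},\dots,c_{\text{hk}6}>0$ such that for $\mathbb{P}^u$-a.e. $\omega$ and $x\in\mathcal{S}_\infty$, $\mathcal{T}(x,\omega)<\infty$ and the two-sided Gaussian bound above holds for $y\in\mathcal{S}_\infty$, $t\geq \mathcal{T}(x,\omega)\vee|x-y|_1^{3/2}$;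 moreover $\mathbb{P}^u[\mathcal{T}(z,\cdot)\geq r]\leq c_{\text{hk}5}e^{-c_{\text{hk}6}(\log r)^{1+\Delta_{\mathrm{S}}}}$ for all $z\in\mathbb{Z}^d$, $r\geq1$. Also $r_{\alpha,R}=\exp(\kappa_{\mathrm{reg}}(\alpha)(\log R)^{1+\Delta_{\mathrm{S}}})$ with $\kappa_{\mathrm{reg}}(\alpha)=\frac{1}{2d}(\kappa_{\mathrm{d}2}(\alpha)\wedge c_{\text{hk}6})$, where $\kappa_{\mathrm{d}2}(\alpha)>0$ is the exponent constant in the volume large deviation bound $\mathbb{P}^u[\,|\mathcal{S}_\infty\cap B(0,R)|/|B(0,R)|\notin[(1-\alpha)\eta(u),(1+\alpha)\eta(u)] \mid 0\in\mathcal{S}_\infty]\leq \kappa_{\mathrm{d}1}(\alpha)e^{-\kappa_{\mathrm{d}2}(\alpha)(\log R)^{1+\Delta_{\mathrm{S}}}}$. *)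

theory Defs
  imports "HOL-Probability.Probability"
begin

text \<open>Sites of Z^d are int ^ 'd; configurations omega : Z^d -> bool (True = open).\<close>

definition l1dist :: "int ^ 'd \<Rightarrow> int ^ 'd \<Rightarrow> real" where
  "l1dist x y = (\<Sum>i\<in>UNIV. real_of_int \<bar>x $ i - y $ i\<bar>)"

definition supball0 :: "real \<Rightarrow> (int ^ 'd) set" where
  "supball0 r = {x. \<forall>i. real_of_int \<bar>x $ i\<bar> \<le> r}"

definition open_edges :: "(int ^ 'd \<Rightarrow> bool) \<Rightarrow> ((int ^ 'd) \<times> (int ^ 'd)) set" where
  "open_edges \<omega> = {(x, y). \<omega> x \<and> \<omega> y \<and> l1dist x y = 1}"

definition open_cluster :: "(int ^ 'd \<Rightarrow> bool) \<Rightarrow> int ^ 'd \<Rightarrow> (int ^ 'd) set" where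
  "open_cluster \<omega> x = {y. (x, y) \<in> (open_edges \<omega>)\<^sup>*}"

text \<open>The infinite open cluster (union of all infinite open clusters; a.s. unique).\<close>
definition S_inf :: "(int ^ 'd \<Rightarrow> bool) \<Rightarrow> (int ^ 'd) set" where
  "S_inf \<omega> = {x. \<omega> x \<and> infinite (open_cluster \<omega> x)}"

definition nbrs :: "(int ^ 'd \<Rightarrow> bool) \<Rightarrow> int ^ 'd \<Rightarrow> (int ^ 'd) set" where
  "nbrs \<omega> x = {y \<in> S_inf \<omega>. l1dist x y = 1}"

definition mu :: "(int ^ 'd \<Rightarrow> bool) \<Rightarrow> int ^ 'd \<Rightarrow> real" where
  "mu \<omega> x = real (card (nbrs \<omega> x))"

fun jump_prob :: "(int ^ 'd \<Rightarrow> bool) \<Rightarrow> nat \<Rightarrow> int ^ 'd \<Rightarrow> int ^ 'd \<Rightarrow> real" where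
  "jump_prob \<omega> 0 x y = (if x = y then 1 else 0)"
| "jump_prob \<omega> (Suc n) x y = (\<Sum>z\<in>nbrs \<omega> x. jump_prob \<omega> n z y / mu \<omega> x)"

text \<open>P^omega_x[X_t = y] for the constant-speed random walk (rate-1 Poisson clock).\<close>
definition trans_prob :: "(int ^ 'd \<Rightarrow> bool) \<Rightarrow> real \<Rightarrow> int ^ 'd \<Rightarrow> int ^ 'd \<Rightarrow> real" where
  "trans_prob \<omega> t x y = (\<Sum>n. exp (- t) * t ^ n / fact n * jump_prob \<omega> n x y)"

definition heat_kernel :: "(int ^ 'd \<Rightarrow> bool) \<Rightarrow> real \<Rightarrow> int ^ 'd \<Rightarrow> int ^ 'd \<Rightarrow> real" where
  "heat_kernel \<omega> t x y = trans_prob \<omega> t x y / mu \<omega> y"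

definition gauss_bound ::
  "real \<Rightarrow> real \<Rightarrow> real \<Rightarrow> real \<Rightarrow> (int ^ 'd \<Rightarrow> bool) \<Rightarrow> real \<Rightarrow> int ^ 'd \<Rightarrow> int ^ 'd \<Rightarrow> bool" where
  "gauss_bound c1 c2 c3 c4 \<omega> t x y \<longleftrightarrow>
     c1 * t powr (- real CARD('d) / 2) * exp (- c2 * (l1dist x y)\<^sup>2 / t) \<le> heat_kernel \<omega> t x y \<and>
     heat_kernel \<omega> t x y \<le> c3 * t powr (- real CARD('d) / 2) * exp (- c4 * (l1dist x y)\<^sup>2 / t)"

definition r_reg :: "'d itself \<Rightarrow> real \<Rightarrow> real \<Rightarrow> real \<Rightarrow> real \<Rightarrow> real" where
  "r_reg _ kd2 c6 \<Delta> R = exp (min kd2 c6 / (2 * real CARD('d)) * (ln R) powr (1 + \<Delta>))"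

text \<open>R_hk(omega, alpha), with inf of the empty set = infinity. kd2 is kappa_d2(alpha).\<close>
definition R_hk ::
  "real \<Rightarrow> real \<Rightarrow> real \<Rightarrow> real \<Rightarrow> real \<Rightarrow> real \<Rightarrow> real \<Rightarrow> (int ^ 'd \<Rightarrow> bool) \<Rightarrow> ereal" where
  "R_hk c1 c2 c3 c4 c6 kd2 \<Delta> \<omega> = Inf (ereal ` {R0. R0 \<ge> 1 \<and>
     (\<forall>R \<ge> R0. \<forall>x \<in> S_inf \<omega> \<inter> supball0 (2 * r_reg TYPE('d) kd2 c6 \<Delta> R).
        \<forall>y \<in> S_inf \<omega>. \<forall>t. t \<ge> max R (l1dist x y powr (3/2)) \<longrightarrow>
          gauss_bound c1 c2 c3 c4 \<omega> t x y)})"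

end

theory Submission
  imports Defs
begin

lemma supball0_mono: "\<rho> \<le> \<rho>' \<Longrightarrow> supball0 \<rho> \<subseteq> supball0 \<rho>'"
  unfolding supball0_def by (auto intro: order_trans)

lemma card_supball0:
  assumes "\<rho> \<ge> 0"
  shows "finite (supball0 \<rho> :: (int ^ 'd) set) \<and>
         real (card (supball0 \<rho> :: (int ^ 'd) set)) \<le> (2 * \<rho> + 1) ^ CARD('d)"
proof -
  define m where "m = \<lfloor>\<rho>\<rfloor>"
  have m0: "m \<ge> 0" using assms by (simp add: m_def)
  define F where "F = (\<lambda>f. (\<chi> i. f i) :: int ^ 'd) ` (PiE UNIV (\<lambda>_::'d. {-m..m}))"
  have sub: "supball0 \<rho> \<subseteq> F"
  proof
    fix x :: "int ^ 'd" assume "x \<in> supball0 \<rho>"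
    then have "\<forall>i. \<bar>x $ i\<bar> \<le> m" unfolding supball0_def m_def by (simp add: le_floor_iff)
    then have "(\<lambda>i. x $ i) \<in> PiE UNIV (\<lambda>_::'d. {-m..m})" by (auto simp: abs_le_iff minus_le_iff)
    then show "x \<in> F" unfolding F_def by (rule image_eqI[rotated]) (simp add: vec_lambda_eta)
  qed
  have finF: "finite F" unfolding F_def by (intro finite_imageI finite_PiE) auto
  have "card F \<le> card (PiE UNIV (\<lambda>_::'d. {-m..m}))" unfolding F_def
    by (intro card_image_le finite_PiE) auto
  also have "\<dots> = nat (2*m+1) ^ CARD('d)" by (simp add: card_PiE)
  finally have cF: "card F \<le> nat (2*m+1) ^ CARD('d)" .
  have "real (card (supball0 \<rho> :: (int ^ 'd) set)) \<le> real (card F)"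
    using card_mono[OF finF sub] by simp
  also have "\<dots> \<le> real (nat (2*m+1) ^ CARD('d))" using cF by linarith
  also have "\<dots> = (real_of_int (2*m+1)) ^ CARD('d)" using m0 by simp
  also have "\<dots> \<le> (2 * \<rho> + 1) ^ CARD('d)"
    by (intro power_mono) (use m0 in \<open>auto simp: m_def\<close>)
  finally show ?thesis using finite_subset[OF sub finF] by simp
qed

lemma ln_succ_bound:
  fixes p :: real and k :: nat
  assumes p: "p > 0" and k: "real k \<ge> exp (1 / ((3/2) powr (1/p) - 1))"
  shows "(ln (real k + 1)) powr p \<le> 3/2 * (ln (real k)) powr p"
proof -
  define \<delta> where "\<delta> = (3/2) powr (1/p) - 1"
  have "(3/2::real) powr (1/p) > 1" using p by (intro gr_one_powr) auto
  then have d: "\<delta> > 0" by (simp add: \<delta>_def)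
  have kpos: "real k > 0" using k by (metis exp_gt_zero less_le_trans)
  have lnk: "ln (real k) \<ge> 1/\<delta>" using k kpos unfolding \<delta>_def
    by (metis exp_le_cancel_iff exp_ln)
  have lk0: "ln (real k) > 0" using lnk d by (meson divide_pos_pos less_le_trans zero_less_one)
  have "ln (real k + 1) - ln (real k) = ln ((real k + 1) / real k)" using kpos by (simp add: ln_div)
  also have "\<dots> \<le> (real k + 1) / real k - 1" using kpos by (intro ln_le_minus_one) auto
  also have "\<dots> = 1 / real k" using kpos by (simp add: field_simps)
  also have "\<dots> \<le> 1" using kpos k
    by (metis div_by_1 exp_gt_zero frac_le less_eq_real_def one_le_exp_iff zero_less_one lnk d
        divide_pos_pos order.trans ln_ge_zero_imp_ge_one)
  finally have "ln (real k + 1) \<le> ln (real k) + 1" by simp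
  also have "\<dots> \<le> ln (real k) * (1 + \<delta>)" using lnk d by (simp add: field_simps)
  finally have l1: "ln (real k + 1) \<le> ln (real k) * (1 + \<delta>)" .
  have "ln (real k + 1) \<ge> 0" using kpos by simp
  then have "(ln (real k + 1)) powr p \<le> (ln (real k) * (1 + \<delta>)) powr p"
    using l1 p by (intro powr_mono2) auto
  also have "\<dots> = (ln (real k)) powr p * (1 + \<delta>) powr p" using lk0 d by (simp add: powr_mult)
  also have "(1 + \<delta>) powr p = 3/2" unfolding \<delta>_def using p by (simp add: powr_powr)
  finally show ?thesis by simp
qed

lemma summable_h:
  fixes a \<Delta> :: real
  assumes a: "a > 0" and D: "\<Delta> > 0"
  shows "summable (\<lambda>k::nat. exp (- a * (ln (real k)) powr (1 + \<Delta>)))"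
proof (rule summable_comparison_test'[OF inverse_power_summable[of 2]])
  define L where "L = max 1 ((2/a) powr (1/\<Delta>))"
  fix n :: nat assume n: "n \<ge> nat \<lceil>exp L\<rceil>"
  have "real n \<ge> exp L" using n by linarith
  then have npos: "real n > 0" by (metis exp_gt_zero less_le_trans)
  have lnL: "ln (real n) \<ge> L" using \<open>real n \<ge> exp L\<close> npos by (metis exp_le_cancel_iff exp_ln)
  have l0: "ln (real n) > 0" using lnL unfolding L_def by linarith
  have "(ln (real n)) powr \<Delta> \<ge> ((2/a) powr (1/\<Delta>)) powr \<Delta>"
    using lnL D by (intro powr_mono2) (auto simp: L_def)
  also have "((2/a) powr (1/\<Delta>)) powr \<Delta> = 2/a" using a D by (simp add: powr_powr)
  finally have pD: "(ln (real n)) powr \<Delta> \<ge> 2/a" .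
  have "(ln (real n)) powr (1 + \<Delta>) = ln (real n) * (ln (real n)) powr \<Delta>"
    using l0 by (simp add: powr_add)
  also have "\<dots> \<ge> ln (real n) * (2/a)" using pD l0 by (intro mult_left_mono) auto
  finally have "a * (ln (real n) * (2/a)) \<le> a * (ln (real n)) powr (1 + \<Delta>)"
    using a by (intro mult_left_mono) auto
  then have "a * (ln (real n)) powr (1 + \<Delta>) \<ge> 2 * ln (real n)" using a by simp
  then have "exp (- a * (ln (real n)) powr (1 + \<Delta>)) \<le> exp (- 2 * ln (real n))" by simp
  also have "exp (- 2 * ln (real n)) = inverse (real n ^ 2)" using npos
    by (simp add: exp_minus exp_of_nat_mult[where n=2, simplified] )
  finally show "norm (exp (- a * (ln (real n)) powr (1 + \<Delta>))) \<le> inverse (real n ^ 2)" by simp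
qed simp

theorem lemma3p3:
  fixes P :: "(int ^ 'd \<Rightarrow> bool) measure"
    and T :: "int ^ 'd \<Rightarrow> (int ^ 'd \<Rightarrow> bool) \<Rightarrow> ereal"
    and c1 c2 c3 c4 c5 c6 \<Delta> \<alpha> :: real
    and kd1 kd2 :: "real \<Rightarrow> real"
  assumes dim: "CARD('d) \<ge> 2"
    and prob: "prob_space P" and space: "space P = UNIV"
    and cpos: "0 < c1" "0 < c2" "0 < c3" "0 < c4" "0 < c5" "0 < c6"
    and Delta: "0 < \<Delta>"
    and alpha: "0 < \<alpha>" "\<alpha> < 1"
    and eta_pos: "measure P {\<omega> \<in> space P. 0 \<in> S_inf \<omega>} > 0"
    and voldev: "0 < kd1 \<alpha>" "0 < kd2 \<alpha>"
      "\<And>R::real. R \<ge> 1 \<Longrightarrow>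
         measure P {\<omega> \<in> space P. 0 \<in> S_inf \<omega> \<and>
            (real (card (S_inf \<omega> \<inter> supball0 R)) / real (card (supball0 R :: (int ^ 'd) set))
               \<notin> {(1 - \<alpha>) * measure P {\<omega> \<in> space P. 0 \<in> S_inf \<omega>} ..
                  (1 + \<alpha>) * measure P {\<omega> \<in> space P. 0 \<in> S_inf \<omega>}})}
         \<le> kd1 \<alpha> * exp (- kd2 \<alpha> * (ln R) powr (1 + \<Delta>)) * measure P {\<omega> \<in> space P. 0 \<in> S_inf \<omega>}"
    and T_meas: "\<And>z. T z \<in> borel_measurable P"
    and T_hk: "AE \<omega> in P. \<forall>x \<in> S_inf \<omega>. T x \<omega> < \<infinity> \<and>
                 (\<forall>y \<in> S_inf \<omega>. \<forall>t. ereal t \<ge> T x \<omega> \<and> t \<ge> l1dist x y powr (3/2) \<longrightarrow>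
                    gauss_bound c1 c2 c3 c4 \<omega> t x y)"
    and T_tail: "\<And>z r. r \<ge> 1 \<Longrightarrow>
                 measure P {\<omega> \<in> space P. T z \<omega> \<ge> ereal r} \<le> c5 * exp (- c6 * (ln r) powr (1 + \<Delta>))"
  shows "(\<exists>C c. 0 < C \<and> 0 < c \<and>
            (\<forall>n::nat. n \<ge> 1 \<longrightarrow>
               (\<exists>A \<in> sets P. {\<omega> \<in> space P. R_hk c1 c2 c3 c4 c6 (kd2 \<alpha>) \<Delta> \<omega> \<ge> ereal (real n)} \<subseteq> A \<and>
                  measure P A \<le> C * exp (- c * (ln (real n)) powr (1 + \<Delta>)))))
         \<and> (AE \<omega> in P. R_hk c1 c2 c3 c4 c6 (kd2 \<alpha>) \<Delta> \<omega> < \<infinity>)"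
proof -
  interpret PS: prob_space P by (rule prob)
  define d where "d = CARD('d)"
  define p where "p = 1 + \<Delta>"
  define g where "g = min (kd2 \<alpha>) c6 / (2 * real d)"
  define r where "r = (\<lambda>R. r_reg TYPE('d) (kd2 \<alpha>) c6 \<Delta> R)"
  have d1: "real d \<ge> 1" using dim by (simp add: d_def)
  have g0: "g \<ge> 0" using voldev(2) cpos(6) d1 by (simp add: g_def)
  have dg: "real d * g \<le> c6 / 2" using d1 by (simp add: g_def field_simps)
  have p0: "p > 0" using Delta by (simp add: p_def)
  have r_eq: "\<And>R. r R = exp (g * (ln R) powr p)"
    by (simp add: r_def r_reg_def g_def p_def d_def)
  have r_ge1: "\<And>R. R \<ge> 1 \<Longrightarrow> r R \<ge> 1"
    using g0 by (simp add: r_eq)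
  have r_mono: "\<And>R R'. 1 \<le> R \<Longrightarrow> R \<le> R' \<Longrightarrow> r R \<le> r R'"
  proof -
    fix R R' :: real assume a: "1 \<le> R" "R \<le> R'"
    have "ln R \<le> ln R'" using a by simp
    then have "(ln R) powr p \<le> (ln R') powr p" using a p0 by (intro powr_mono2) auto
    then show "r R \<le> r R'" using g0 by (simp add: r_eq mult_left_mono)
  qed
  define K0 :: nat where "K0 = nat \<lceil>exp (1 / ((3/2) powr (1/p) - 1))\<rceil> + 2"
  have K0: "\<And>k. k \<ge> K0 \<Longrightarrow> (ln (real k + 1)) powr p \<le> 3/2 * (ln (real k)) powr p"
    by (rule ln_succ_bound[OF p0]) (simp add: K0_def, linarith)
  have K02: "K0 \<ge> 2" by (simp add: K0_def)
  define B where "B = (\<lambda>k::nat. \<Union>x \<in> (supball0 (2 * r (real k + 1)) :: (int ^ 'd) set).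
                          {\<omega> \<in> space P. ereal (real k) \<le> T x \<omega>})"
  have mT: "\<And>x k. {\<omega> \<in> space P. ereal (real k) \<le> T x \<omega>} \<in> sets P"
    using T_meas by measurable
  have finB: "\<And>k. finite (supball0 (2 * r (real k + 1)) :: (int ^ 'd) set)"
  proof -
    fix k :: nat
    have "2 * r (real k + 1) \<ge> 0" using r_ge1[of "real k + 1"] by simp
    then show "finite (supball0 (2 * r (real k + 1)) :: (int ^ 'd) set)"
      using card_supball0 by blast
  qed
  have mB: "\<And>k. B k \<in> sets P" unfolding B_def
    by (intro sets.finite_UN finB mT)
  define D where "D = 5 ^ d * c5"
  have D0: "D > 0" using cpos by (simp add: D_def)
  have bB: "\<And>k. k \<ge> K0 \<Longrightarrow> measure P (B k) \<le> D * exp (- (c6/4) * (ln (real k)) powr p)"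
  proof -
    fix k :: nat assume k: "k \<ge> K0"
    define \<rho> where "\<rho> = 2 * r (real k + 1)"
    have r1: "r (real k + 1) \<ge> 1" by (intro r_ge1) simp
    have k1: "real k \<ge> 1" using k K02 by linarith
    have "measure P (B k) \<le> (\<Sum>x \<in> (supball0 \<rho> :: (int ^ 'd) set). measure P {\<omega> \<in> space P. ereal (real k) \<le> T x \<omega>})"
      unfolding B_def \<rho>_def by (intro measure_UNION_le finB mT)
    also have "\<dots> \<le> real (card (supball0 \<rho> :: (int ^ 'd) set)) * (c5 * exp (- c6 * (ln (real k)) powr (1 + \<Delta>)))"
      by (intro sum_bounded_above) (use T_tail k1 in auto)
    also have "\<dots> \<le> (2 * \<rho> + 1) ^ d * (c5 * exp (- c6 * (ln (real k)) powr p))"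
      using card_supball0[of \<rho>] r1 cpos unfolding d_def p_def \<rho>_def
      by (intro mult_right_mono) auto
    also have "(2 * \<rho> + 1) ^ d \<le> (5 * r (real k + 1)) ^ d"
      using r1 unfolding \<rho>_def by (intro power_mono) auto
    also have "(5 * r (real k + 1)) ^ d = 5 ^ d * exp (real d * (g * (ln (real k + 1)) powr p))"
      by (simp add: r_eq power_mult_distrib exp_of_nat_mult)
    also have "exp (real d * (g * (ln (real k + 1)) powr p)) \<le> exp (3/4 * c6 * (ln (real k)) powr p)"
    proof -
      have "real d * (g * (ln (real k + 1)) powr p) = (real d * g) * (ln (real k + 1)) powr p" by simp
      also have "\<dots> \<le> (c6/2) * (ln (real k + 1)) powr p" by (intro mult_right_mono dg) simp
      also have "\<dots> \<le> (c6/2) * (3/2 * (ln (real k)) powr p)"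
        using K0[OF k] cpos by (intro mult_left_mono) auto
      finally show ?thesis by simp
    qed
    finally have "measure P (B k) \<le> 5 ^ d * exp (3/4 * c6 * (ln (real k)) powr p) * (c5 * exp (- c6 * (ln (real k)) powr p))"
      using cpos by (simp add: mult_right_mono)
    also have "\<dots> = D * (exp (3/4 * c6 * (ln (real k)) powr p) * exp (- c6 * (ln (real k)) powr p))"
      by (simp add: D_def algebra_simps)
    also have "exp (3/4 * c6 * (ln (real k)) powr p) * exp (- c6 * (ln (real k)) powr p)
        = exp (- (c6/4) * (ln (real k)) powr p)"
      by (simp only: mult_exp_exp) (rule arg_cong[where f=exp], simp add: algebra_simps)
    finally show "measure P (B k) \<le> D * exp (- (c6/4) * (ln (real k)) powr p)" .
  qed
  define h where "h = (\<lambda>k::nat. exp (- (c6/8) * (ln (real k)) powr p))"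
  have sh: "summable h" unfolding h_def p_def using cpos Delta by (intro summable_h) auto
  define S where "S = suminf h"
  have S0: "S \<ge> 0" unfolding S_def h_def by (intro suminf_nonneg sh[unfolded h_def]) auto
  define c where "c = c6 / 12"
  define C where "C = max (D * S + 1) (exp (c * (ln (real K0)) powr p))"
  have C0: "C > 0" unfolding C_def by (rule less_le_trans[OF exp_gt_zero max.cobounded2])
  have c0: "c > 0" using cpos by (simp add: c_def)
  obtain N where N: "\<And>\<omega>. \<omega> \<in> space P - N \<Longrightarrow> (\<forall>x \<in> S_inf \<omega>. T x \<omega> < \<infinity> \<and>
                 (\<forall>y \<in> S_inf \<omega>. \<forall>t. ereal t \<ge> T x \<omega> \<and> t \<ge> l1dist x y powr (3/2) \<longrightarrow>
                    gauss_bound c1 c2 c3 c4 \<omega> t x y))" and Nnull: "N \<in> null_sets P"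
    using AE_E3[OF T_hk] by blast
  have part1: "\<forall>n::nat. n \<ge> 1 \<longrightarrow>
               (\<exists>A \<in> sets P. {\<omega> \<in> space P. R_hk c1 c2 c3 c4 c6 (kd2 \<alpha>) \<Delta> \<omega> \<ge> ereal (real n)} \<subseteq> A \<and>
                  measure P A \<le> C * exp (- c * (ln (real n)) powr p))"
  proof (intro allI impI)
    fix n :: nat assume n1: "n \<ge> 1"
    show "\<exists>A \<in> sets P. {\<omega> \<in> space P. R_hk c1 c2 c3 c4 c6 (kd2 \<alpha>) \<Delta> \<omega> \<ge> ereal (real n)} \<subseteq> A \<and>
                  measure P A \<le> C * exp (- c * (ln (real n)) powr p)"
    proof (cases "n - 1 \<ge> K0")
      case False
      then have nK: "real n \<le> real K0" by linarith
      have "(ln (real n)) powr p \<le> (ln (real K0)) powr p"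
        using nK n1 p0 by (intro powr_mono2) auto
      then have "1 \<le> exp (c * (ln (real K0)) powr p) * exp (- c * (ln (real n)) powr p)"
        using c0 by (simp add: mult_exp_exp)
      also have "\<dots> \<le> C * exp (- c * (ln (real n)) powr p)"
        by (intro mult_right_mono) (auto simp: C_def)
      finally show ?thesis by (intro bexI[of _ "space P"]) (auto simp: PS.prob_space)
    next
      case True
      define K where "K = n - 1"
      have Kn: "real K + 1 = real n" using n1 by (simp add: K_def)
      have KK0: "K \<ge> K0" using True by (simp add: K_def)
      define E where "E = exp (- c * (ln (real n)) powr p)"
      have EK: "exp (- (c6/8) * (ln (real K)) powr p) \<le> E"
      proof -
        have "(ln (real n)) powr p \<le> 3/2 * (ln (real K)) powr p" using K0[OF KK0] Kn by simp
        then have "c * (ln (real n)) powr p \<le> (c6/8) * (ln (real K)) powr p"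
          using cpos by (simp add: c_def)
        then show ?thesis by (simp add: E_def)
      qed
      have bBi: "\<And>i. measure P (B (i + K)) \<le> D * E * h i"
      proof -
        fix i :: nat
        have lK: "ln (real K) \<le> ln (real (i + K))" using KK0 K02 by simp
        have lK0: "ln (real K) \<ge> 0" using KK0 K02 by simp
        have li: "ln (real i) \<le> ln (real (i + K))"
          using lK0 by (cases "i = 0") auto
        have "measure P (B (i + K)) \<le> D * exp (- (c6/4) * (ln (real (i + K))) powr p)"
          using bB[of "i + K"] KK0 by simp
        also have "exp (- (c6/4) * (ln (real (i + K))) powr p) =
            exp (- (c6/8) * (ln (real (i + K))) powr p) * exp (- (c6/8) * (ln (real (i + K))) powr p)"
          by (simp only: mult_exp_exp) (rule arg_cong[where f=exp], simp add: algebra_simps)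
        also have "\<dots> \<le> exp (- (c6/8) * (ln (real K)) powr p) * h i"
        proof (intro mult_mono)
          have "(ln (real K)) powr p \<le> (ln (real (i + K))) powr p"
            using lK lK0 p0 by (intro powr_mono2) auto
          then show "exp (- (c6/8) * (ln (real (i + K))) powr p) \<le> exp (- (c6/8) * (ln (real K)) powr p)"
            using cpos by simp
          have "ln (real i) \<ge> 0" by (cases "i = 0") auto
          then have "(ln (real i)) powr p \<le> (ln (real (i + K))) powr p"
            using li p0 by (intro powr_mono2) auto
          then show "exp (- (c6/8) * (ln (real (i + K))) powr p) \<le> h i"
            using cpos by (simp add: h_def)
        qed auto
        also have "\<dots> \<le> E * h i" using EK by (intro mult_right_mono) (auto simp: h_def)
        finally show "measure P (B (i + K)) \<le> D * E * h i" using D0 by (simp add: mult_left_mono mult.assoc)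
      qed
      have smB: "summable (\<lambda>i. measure P (B (i + K)))"
        by (rule summable_comparison_test'[where g = "\<lambda>i. D * E * h i" and N = 0])
           (use sh bBi in \<open>auto intro: summable_mult\<close>)
      define A where "A = (\<Union>i. B (i + K)) \<union> N"
      have mA: "A \<in> sets P" unfolding A_def using mB Nnull by auto
      have "measure P A = measure P (\<Union>i. B (i + K))"
        unfolding A_def by (intro measure_Un_null_set Nnull) (use mB in auto)
      also have "\<dots> \<le> (\<Sum>i. measure P (B (i + K)))"
        by (intro PS.finite_measure_subadditive_countably smB) (use mB in auto)
      also have "\<dots> \<le> (\<Sum>i. D * E * h i)"
        by (intro suminf_le bBi smB summable_mult sh)
      also have "\<dots> = D * E * S" unfolding S_def by (intro suminf_mult sh)
      also have "\<dots> \<le> C * E" using S0 D0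
        by (simp add: C_def E_def mult.commute mult_left_mono)
      finally have mAb: "measure P A \<le> C * E" .
      have cover: "{\<omega> \<in> space P. R_hk c1 c2 c3 c4 c6 (kd2 \<alpha>) \<Delta> \<omega> \<ge> ereal (real n)} \<subseteq> A"
      proof (rule subsetI, rule ccontr)
        fix \<omega> assume w: "\<omega> \<in> {\<omega> \<in> space P. R_hk c1 c2 c3 c4 c6 (kd2 \<alpha>) \<Delta> \<omega> \<ge> ereal (real n)}"
          and nA: "\<omega> \<notin> A"
        have good: "\<forall>x \<in> S_inf \<omega>. T x \<omega> < \<infinity> \<and>
                 (\<forall>y \<in> S_inf \<omega>. \<forall>t. ereal t \<ge> T x \<omega> \<and> t \<ge> l1dist x y powr (3/2) \<longrightarrow>
                    gauss_bound c1 c2 c3 c4 \<omega> t x y)" using N w nA by (auto simp: A_def)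
        have nB: "\<And>k. k \<ge> K \<Longrightarrow> \<omega> \<notin> B k"
        proof -
          fix k assume "k \<ge> K"
          then have "k = (k - K) + K" by simp
          then show "\<omega> \<notin> B k" using nA unfolding A_def by (metis UN_I UNIV_I UnI1)
        qed
        have K1: "real K \<ge> 1" using KK0 K02 by simp
        have inset: "real K \<in> {R0. R0 \<ge> 1 \<and>
          (\<forall>R \<ge> R0. \<forall>x \<in> S_inf \<omega> \<inter> supball0 (2 * r_reg TYPE('d) (kd2 \<alpha>) c6 \<Delta> R).
          \<forall>y \<in> S_inf \<omega>. \<forall>t. t \<ge> max R (l1dist x y powr (3/2)) \<longrightarrow>
          gauss_bound c1 c2 c3 c4 \<omega> t x y)}"
        proof (intro CollectI conjI K1 allI impI ballI)
          fix R x y t assume R: "R \<ge> real K" and x: "x \<in> S_inf \<omega> \<inter> supball0 (2 * r_reg TYPE('d) (kd2 \<alpha>) c6 \<Delta> R)"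
            and y: "y \<in> S_inf \<omega>" and t: "t \<ge> max R (l1dist x y powr (3/2))"
          define k where "k = nat \<lfloor>R\<rfloor>"
          have R0: "R \<ge> 0" using R K1 by linarith
          have kR: "real k \<le> R" "R < real k + 1" using R0 by (simp_all add: k_def)
          have kK: "k \<ge> K" using R by (simp add: k_def le_nat_floor)
          have "r R \<le> r (real k + 1)" using R K1 kR by (intro r_mono) auto
          then have "x \<in> supball0 (2 * r (real k + 1))"
            using x supball0_mono[of "2 * r R" "2 * r (real k + 1)"] by (auto simp: r_def)
          moreover have "\<omega> \<in> space P" using w by simp
          ultimately have "\<not> ereal (real k) \<le> T x \<omega>" using nB[OF kK] unfolding B_def by blast
          then have "T x \<omega> \<le> ereal t" using kR t by (metis ereal_less_eq(3) le_max_iff_disj linorder_not_le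
              order.trans order_less_imp_le)
          then show "gauss_bound c1 c2 c3 c4 \<omega> t x y" using good x y t by auto
        qed
        have "R_hk c1 c2 c3 c4 c6 (kd2 \<alpha>) \<Delta> \<omega> \<le> ereal (real K)"
          unfolding R_hk_def by (rule Inf_lower) (use inset in blast)
        also have "\<dots> < ereal (real n)" using Kn by simp
        finally show False using w leD by blast
      qed
      show ?thesis using mA cover mAb by (auto simp: E_def)
    qed
  qed
  show ?thesis
  proof
    show "\<exists>C c. 0 < C \<and> 0 < c \<and>
            (\<forall>n::nat. n \<ge> 1 \<longrightarrow>
               (\<exists>A \<in> sets P. {\<omega> \<in> space P. R_hk c1 c2 c3 c4 c6 (kd2 \<alpha>) \<Delta> \<omega> \<ge> ereal (real n)} \<subseteq> A \<and>
                  measure P A \<le> C * exp (- c * (ln (real n)) powr (1 + \<Delta>))))"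
      using C0 c0 part1 unfolding p_def by blast
  next
    have "\<exists>A. \<forall>n::nat. n \<ge> 1 \<longrightarrow> A n \<in> sets P \<and>
        {\<omega> \<in> space P. R_hk c1 c2 c3 c4 c6 (kd2 \<alpha>) \<Delta> \<omega> \<ge> ereal (real n)} \<subseteq> A n \<and>
        measure P (A n) \<le> C * exp (- c * (ln (real n)) powr p)"
      by (rule choice) (use part1 in blast)
    then obtain A where A': "\<forall>n::nat. n \<ge> 1 \<longrightarrow> A n \<in> sets P \<and>
        {\<omega> \<in> space P. R_hk c1 c2 c3 c4 c6 (kd2 \<alpha>) \<Delta> \<omega> \<ge> ereal (real n)} \<subseteq> A n \<and>
        measure P (A n) \<le> C * exp (- c * (ln (real n)) powr p)" by blast
    have A: "\<And>n::nat. n \<ge> 1 \<Longrightarrow> A n \<in> sets P \<and>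
        {\<omega> \<in> space P. R_hk c1 c2 c3 c4 c6 (kd2 \<alpha>) \<Delta> \<omega> \<ge> ereal (real n)} \<subseteq> A n \<and>
        measure P (A n) \<le> C * exp (- c * (ln (real n)) powr p)" using A' by blast
    define M where "M = (\<Inter>n. A (Suc n))"
    have mM: "M \<in> sets P" unfolding M_def using A by auto
    have "measure P M \<le> 0"
    proof (rule LIMSEQ_le_const)
      show "(\<lambda>n. C * real n powr (- c)) \<longlonglongrightarrow> 0"
        using c0 by (intro tendsto_mult_right_zero tendsto_neg_powr filterlim_real_sequentially) auto
      show "\<exists>N. \<forall>n\<ge>N. measure P M \<le> C * real n powr (- c)"
      proof (intro exI allI impI)
        fix n :: nat assume n: "n \<ge> 3"
        have n1: "n \<ge> 1" and nS: "n = Suc (n - 1)" using n by auto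
        have "M \<subseteq> A n" unfolding M_def using nS by (metis INT_lower UNIV_I)
        then have "measure P M \<le> measure P (A n)"
          using A[OF n1] mM by (intro PS.finite_measure_mono) auto
        also have "\<dots> \<le> C * exp (- c * (ln (real n)) powr p)" using A[OF n1] by simp
        also have "exp (- c * (ln (real n)) powr p) \<le> exp (- c * ln (real n))"
        proof -
          have "exp 1 \<le> (3::real)" using exp_le by simp
          then have "exp 1 \<le> real n" using n by linarith
          then have l1: "ln (real n) \<ge> 1" using n by (metis exp_gt_zero exp_le_cancel_iff exp_ln less_le_trans)
          have "(ln (real n)) powr 1 \<le> (ln (real n)) powr p"
            using l1 Delta by (intro powr_mono) (auto simp: p_def)
          then show ?thesis using c0 l1 by simp
        qed
        also have "exp (- c * ln (real n)) = real n powr (- c)"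
          using n by (simp add: powr_def)
        finally show "measure P M \<le> C * real n powr (- c)" using C0 by (simp add: mult_left_mono)
      qed
    qed
    then have Mnull: "M \<in> null_sets P" using mM by (simp add: null_sets_def PS.emeasure_eq_measure) (meson antisym measure_nonneg)
    show "AE \<omega> in P. R_hk c1 c2 c3 c4 c6 (kd2 \<alpha>) \<Delta> \<omega> < \<infinity>"
    proof (rule AE_I'[OF Mnull], rule subsetI)
      fix \<omega> assume w: "\<omega> \<in> {\<omega> \<in> space P. \<not> R_hk c1 c2 c3 c4 c6 (kd2 \<alpha>) \<Delta> \<omega> < \<infinity>}"
      show "\<omega> \<in> M" unfolding M_def
      proof
        fix n :: nat
        have "R_hk c1 c2 c3 c4 c6 (kd2 \<alpha>) \<Delta> \<omega> \<ge> ereal (real (Suc n))" using w by auto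
        then show "\<omega> \<in> A (Suc n)" using A[of "Suc n"] w by auto
      qed
    qed
  qed
qed

end
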